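(* Let $k,n,m$ be positive integers with $1\le m\le kn$, and let $\mathcal{L}\subseteq\mathbb{R}^{n\times n}$ be a real linear subspace of dimension $r$ with ordered basis $\{S_1,\dots,S_r\}$. Let $P=[\mathrm{Vec}(S_1)\ \mathrm{Vec}(S_2)\ \cdots\ \mathrm{Vec}(S_r)]\in\mathbb{R}^{n^2\times r}$. Let $(E,X)\in\mathbb{R}^{m\times m}\times\mathbb{R}^{n\times m}$ be a real-form matrix eigenpair, i.e. $E=\mathrm{diag}(E_1,\dots,E_t,e_{2t+1},\dots,e_m)$ with $E_j=\begin{bmatrix}\alpha_j&\beta_j\\-\beta_j&\alpha_j\end{bmatrix}$ and $X=[u_1\ v_1\ \cdots\ u_t\ v_t\ \phi_{2t+1}\ \cdots\ \phi_m]$, as described in the context. Define $$U=\big[\,((XE^{k-1})^T\otimes I_n)P\ \ ((XE^{k-2})^T\otimes I_n)P\ \ \cdots\ \ (X^T\otimes I_n)P\,\big]\in\mathbb{R}^{mn\times kr},\qquad b=\mathrm{Vec}(-XE^k)\in\mathbb{R}^{mn}.$$ Then there exist matrices $A_0,A_1,\dots,A_{k-1}\in\mathcal{L}$ satisfying $$\sum_{i=0}^{k-1}A_iXE^i=-XE^k$$ (i.e. the monic matrix polynomial $\lambda^kI_n+\sum_{i=0}^{k-1}\lambda^iA_i$ has $(E,X)$ as a real matrix eigenpair) if and only if $UU^\dagger b=b$. In that case, the solutions are given by $$\mathrm{Vec}(A_i)=P\Big((e_{k-i}\otimes I_r)\big(U^\dagger b+(I_{kr}-U^\dagger U)y\big)\Big),\qquad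 i=0,1,\dots,k-1,$$ where $y\in\mathbb{R}^{kr}$ is an arbitrary vector. Moreover, the solution $(A_0,\dots,A_{k-1})$ is unique if and only if $UU^\dagger b=b$ and $U^\dagger U=I_{kr}$, in which case $$\mathrm{Vec}(A_i)=P\big((e_{k-i}\otimes I_r)U^\dagger b\big),\qquad i=0,1,\dots,k-1.$$
   Context: For a matrix $A\in\mathbb{R}^{n\times n}$, $\mathrm{Vec}(A)\in\mathbb{R}^{n^2}$ is the vector obtained by stacking the columns of $A$ on top of one another. $\otimes$ denotes the Kronecker product, $U^\dagger$ the Moore–Penrose pseudoinverse of $U$, $I_q$ the $q\times q$ identity matrix, and $e_j$ (for $1\le j\le k$) denotes the $j$-th row of $I_k$, so $e_{k-i}\otimes I_r\in\mathbb{R}^{r\times kr}$. Each $A\in\mathcal{L}$ is written uniquely as $A=\sum_{\ell=1}^r\alpha_\ell S_\ell$, so that $\mathrm{Vec}(A)=P[\alpha_1,\dots,\alpha_r]^T$. Real-form eigendata: given $m$ eigenvalues of which $t$ are complex conjugate pairs $\alpha_j\pm i\beta_j$ ($j=1,\dots,t$) with eigenvectors $u_j\pm iv_j$, and $m-2t$ are real eigenvalues $e_{2t+1},\dots,e_m$ with real eigenvectors $\phi_{2t+1},\dots,\phi_m\in\mathbb{R}^n$, the real-form matrix representations are $E$ and $X$ as in the claim. *)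

theory Defs
  imports "Jordan_Normal_Form.Matrix"
begin

definition vecm :: "real mat \<Rightarrow> real vec" where
  "vecm A = vec (dim_row A * dim_col A) (\<lambda>i. A $$ (i mod dim_row A, i div dim_row A))"

definition kron :: "real mat \<Rightarrow> real mat \<Rightarrow> real mat" where
  "kron A B = mat (dim_row A * dim_row B) (dim_col A * dim_col B)
     (\<lambda>(i,j). A $$ (i div dim_row B, j div dim_col B) * B $$ (i mod dim_row B, j mod dim_col B))"

definition is_pinv :: "real mat \<Rightarrow> real mat \<Rightarrow> bool" where
  "is_pinv U V \<longleftrightarrow> V \<in> carrier_mat (dim_col U) (dim_row U) \<and>
     U * V * U = U \<and> V * U * V = V \<and>
     (U * V)\<^sup>T = U * V \<and> (V * U)\<^sup>T = V * U"

definition pinv :: "real mat \<Rightarrow> real mat" where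
  "pinv U = (THE V. is_pinv U V)"

(* e_j, 1 <= j <= k: the j-th row of I_k, as a 1 x k matrix *)
definition unit_row :: "nat \<Rightarrow> nat \<Rightarrow> real mat" where
  "unit_row k j = mat 1 k (\<lambda>(_, c). if c = j - 1 then 1 else 0)"

definition lin_comb :: "nat \<Rightarrow> nat \<Rightarrow> (nat \<Rightarrow> real mat) \<Rightarrow> (nat \<Rightarrow> real) \<Rightarrow> real mat" where
  "lin_comb n r S c = mat n n (\<lambda>(i,j). \<Sum>l\<in>{1..r}. c l * S l $$ (i,j))"

definition span_L :: "nat \<Rightarrow> nat \<Rightarrow> (nat \<Rightarrow> real mat) \<Rightarrow> real mat set" where
  "span_L n r S = {lin_comb n r S c | c. True}"

definition is_basis :: "nat \<Rightarrow> nat \<Rightarrow> (nat \<Rightarrow> real mat) \<Rightarrow> bool" where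
  "is_basis n r S \<longleftrightarrow> (\<forall>l\<in>{1..r}. S l \<in> carrier_mat n n) \<and>
     (\<forall>c. lin_comb n r S c = 0\<^sub>m n n \<longrightarrow> (\<forall>l\<in>{1..r}. c l = 0))"

definition Pmat :: "nat \<Rightarrow> nat \<Rightarrow> (nat \<Rightarrow> real mat) \<Rightarrow> real mat" where
  "Pmat n r S = mat (n * n) r (\<lambda>(i,l). vecm (S (l + 1)) $ i)"

(* real-form E = diag(E_1,...,E_t, e_{2t+1},...,e_m), E_j = [[alpha_j, beta_j],[-beta_j, alpha_j]] *)
definition realform_E :: "nat \<Rightarrow> nat \<Rightarrow> (nat \<Rightarrow> real) \<Rightarrow> (nat \<Rightarrow> real) \<Rightarrow> (nat \<Rightarrow> real) \<Rightarrow> real mat" where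
  "realform_E m t \<alpha> \<beta> e = mat m m (\<lambda>(i,j).
     if i < 2*t \<and> j < 2*t then
       (if i div 2 = j div 2 then
          (let p = i div 2 + 1 in
           if i mod 2 = j mod 2 then \<alpha> p
           else if i mod 2 = 0 then \<beta> p else - \<beta> p)
        else 0)
     else if i = j then e (i + 1) else 0)"

(* real-form X = [u_1 v_1 ... u_t v_t phi_{2t+1} ... phi_m] in R^{n x m} *)
definition realform_X :: "nat \<Rightarrow> nat \<Rightarrow> nat \<Rightarrow> (nat \<Rightarrow> real vec) \<Rightarrow> (nat \<Rightarrow> real vec) \<Rightarrow> (nat \<Rightarrow> real vec) \<Rightarrow> real mat" where
  "realform_X n m t u v \<phi> = mat n m (\<lambda>(i,c).
     if c < 2*t then (if even c then u (c div 2 + 1) $ i else v (c div 2 + 1) $ i)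
     else \<phi> (c + 1) $ i)"

(* U = [((X E^{k-1})^T (x) I_n) P  ...  (X^T (x) I_n) P] in R^{mn x kr}:
   column block number l (0-based) is ((X E^{k-1-l})^T (x) I_n) P *)
definition Umat :: "nat \<Rightarrow> nat \<Rightarrow> nat \<Rightarrow> nat \<Rightarrow> real mat \<Rightarrow> real mat \<Rightarrow> real mat \<Rightarrow> real mat" where
  "Umat k n m r P X E = mat (m * n) (k * r) (\<lambda>(i,j).
     (kron ((X * (E ^\<^sub>m (k - 1 - j div r)))\<^sup>T) (1\<^sub>m n) * P) $$ (i, j mod r))"

definition msum :: "nat \<Rightarrow> nat \<Rightarrow> nat \<Rightarrow> (nat \<Rightarrow> real mat) \<Rightarrow> real mat" where
  "msum nr nc k F = mat nr nc (\<lambda>ij. \<Sum>i<k. F i $$ ij)"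

definition is_solution :: "nat \<Rightarrow> nat \<Rightarrow> nat \<Rightarrow> real mat set \<Rightarrow> real mat \<Rightarrow> real mat \<Rightarrow> (nat \<Rightarrow> real mat) \<Rightarrow> bool" where
  "is_solution k n m L X E A \<longleftrightarrow>
     (\<forall>i<k. A i \<in> carrier_mat n n \<and> A i \<in> L) \<and>
     msum n m k (\<lambda>i. A i * X * (E ^\<^sub>m i)) = - (X * (E ^\<^sub>m k))"

end

theory Submission
  imports Defs "Jordan_Normal_Form.Gauss_Jordan_Elimination"
begin

lemma massoc: "dim_col A = dim_row B \<Longrightarrow> dim_col B = dim_row C \<Longrightarrow> A * B * C = A * (B * C)"
  by (rule assoc_mult_mat[of A "dim_row A" "dim_col A" B "dim_col B" C "dim_col C"]) auto

lemma mtm_zero: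
  fixes N :: "real mat"
  assumes N: "N \<in> carrier_mat a c" and z: "N\<^sup>T * N = 0\<^sub>m c c"
  shows "N = 0\<^sub>m a c"
proof (rule eq_matI)
  fix i j assume i: "i < dim_row (0\<^sub>m a c :: real mat)" and j: "j < dim_col (0\<^sub>m a c :: real mat)"
  hence ia: "i < a" and jc: "j < c" by auto
  have "(N\<^sup>T * N) $$ (j,j) = 0" using z jc by simp
  hence "(\<Sum>x\<in>{0..<a}. N $$ (x,j) * N $$ (x,j)) = 0"
    using N jc by (simp add: scalar_prod_def row_transpose)
  hence "\<forall>x\<in>{0..<a}. N $$ (x,j) * N $$ (x,j) = 0"
    by (subst sum_nonneg_eq_0_iff[symmetric]) auto
  hence "N $$ (i,j) * N $$ (i,j) = 0" using ia by auto
  thus "N $$ (i,j) = (0\<^sub>m a c) $$ (i,j)" using ia jc by simp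
qed (use N in auto)

lemma mtm_cancel:
  fixes M W :: "real mat"
  assumes M: "M \<in> carrier_mat a c" and W: "W \<in> carrier_mat c d"
    and z: "M\<^sup>T * M * W = 0\<^sub>m c d"
  shows "M * W = 0\<^sub>m a d"
proof -
  have "(M * W)\<^sup>T * (M * W) = W\<^sup>T * (M\<^sup>T * M * W)"
    using M W by (simp add: transpose_mult[of M a c W d] assoc_mult_mat[of "W\<^sup>T" d c "M\<^sup>T" a "M*W" d]
       assoc_mult_mat[of "M\<^sup>T" c a M c W d])
  also have "\<dots> = 0\<^sub>m d d" using z W by simp
  finally show ?thesis using mtm_zero[of "M*W" a d] M W by simp
qed

lemma ginv_exists:
  fixes M :: "real mat"
  assumes M: "M \<in> carrier_mat a c"
  shows "\<exists>G \<in> carrier_mat c a. M * G * M = M"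
proof -
  define C where "C = gauss_jordan_single M"
  note gj = gauss_jordan_single[OF M C_def[symmetric]]
  from gj(4) obtain P Q where CPM: "C = P * M" and P: "P \<in> carrier_mat a a" and Q: "Q \<in> carrier_mat a a"
    and QP: "Q * P = 1\<^sub>m a" and PQ: "P * Q = 1\<^sub>m a" by auto
  from gj(3) gj(2) obtain f where pf: "pivot_fun C f c" unfolding row_echelon_form_def by auto
  have Cc: "C \<in> carrier_mat a c" by fact
  have dr: "dim_row C = a" using Cc by auto
  note pD = pivot_funD[OF dr pf]
  define R :: "real mat" where "R = mat c a (\<lambda>(j,i). if f i < c \<and> j = f i then 1 else 0)"
  have R: "R \<in> carrier_mat c a" unfolding R_def by auto
  have CR: "(C * R) $$ (x,i) = (if f i < c \<and> x = i then 1 else 0)" if x: "x < a" and i: "i < a" for x i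
  proof -
    have "(C * R) $$ (x,i) = (\<Sum>j\<in>{0..<c}. C $$ (x,j) * (if f i < c \<and> j = f i then 1 else 0))"
      using x i Cc R by (simp add: scalar_prod_def R_def)
    also have "\<dots> = (if f i < c then C $$ (x, f i) else 0)"
      by (auto simp: if_distrib cong: if_cong)
    also have "\<dots> = (if f i < c \<and> x = i then 1 else 0)"
      using pD(4)[OF i] pD(5)[OF i _ x] by auto
    finally show ?thesis .
  qed
  have CRC: "C * R * C = C"
  proof (rule eq_matI)
    fix x y assume x: "x < dim_row C" and y: "y < dim_col C"
    hence xa: "x < a" and yc: "y < c" using Cc by auto
    have "(C * R * C) $$ (x,y) = (\<Sum>i\<in>{0..<a}. (C*R) $$ (x,i) * C $$ (i,y))"
      using xa yc Cc R by (simp add: scalar_prod_def del: assoc_mult_mat)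
    also have "\<dots> = (\<Sum>i\<in>{0..<a}. (if f i < c \<and> x = i then 1 else 0) * C $$ (i,y))"
      by (rule sum.cong, auto simp: CR xa)
    also have "\<dots> = (\<Sum>i\<in>{0..<a}. if i = x then (if f x < c then C $$ (x,y) else 0) else 0)"
      by (rule sum.cong) auto
    also have "\<dots> = (if f x < c then C $$ (x,y) else 0)"
      using xa by simp
    also have "\<dots> = C $$ (x,y)"
    proof (cases "f x < c")
      case False
      hence "f x = c" using pD(1)[OF xa] by auto
      thus ?thesis using pD(2)[OF xa, of y] yc False by auto
    qed auto
    finally show "(C * R * C) $$ (x,y) = C $$ (x,y)" .
  qed (use Cc R in auto)
  have MQC: "M = Q * C"
  proof -
    have "M = (Q * P) * M" using QP M by simp
    also have "\<dots> = Q * C" using Q P M CPM by simp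
    finally show ?thesis .
  qed
  have MR: "M * R \<in> carrier_mat a a" using M R by auto
  have "M * (R * P) * M = M * R * P * M" using assoc_mult_mat[OF M R P] by simp
  also have "\<dots> = M * R * (P * M)" using assoc_mult_mat[OF MR P M] by simp
  also have "\<dots> = Q * C * R * C" using CPM MQC by simp
  also have "\<dots> = Q * (C * R * C)" using Q Cc R by (simp add: massoc)
  also have "\<dots> = M" using CRC MQC by simp
  finally show ?thesis using R P by (intro bexI[of _ "R * P"]) auto
qed

lemma mtrans: "dim_col A = dim_row B \<Longrightarrow> (A * B)\<^sup>T = B\<^sup>T * (A\<^sup>T :: real mat)"
  by (rule transpose_mult[of A "dim_row A" "dim_col A" B "dim_col B"]) auto

lemma mat_eq_of_minus: "(A :: real mat) \<in> carrier_mat a c \<Longrightarrow> B \<in> carrier_mat a c \<Longrightarrow> A - B = 0\<^sub>m a c \<Longrightarrow> A = B"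
proof (rule eq_matI)
  fix i j assume "A \<in> carrier_mat a c" "B \<in> carrier_mat a c" "A - B = 0\<^sub>m a c" "i < dim_row B" "j < dim_col B"
  hence "(A - B) $$ (i,j) = 0" by auto
  moreover have "(A - B) $$ (i,j) = A $$ (i,j) - B $$ (i,j)" using \<open>i < dim_row B\<close> \<open>j < dim_col B\<close> by simp
  ultimately show "A $$ (i,j) = B $$ (i,j)" by simp
qed auto

lemma mtm_cancel2:
  fixes M W1 W2 :: "real mat"
  assumes M: "M \<in> carrier_mat a c" and W1: "W1 \<in> carrier_mat c d" and W2: "W2 \<in> carrier_mat c d"
    and z: "M\<^sup>T * M * W1 = M\<^sup>T * M * W2"
  shows "M * W1 = M * W2"
proof -
  have MM: "M\<^sup>T * M \<in> carrier_mat c c" using M by auto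
  have W12: "W1 - W2 \<in> carrier_mat c d" using W1 W2 by auto
  have "M\<^sup>T * M * (W1 - W2) = M\<^sup>T * M * W1 - M\<^sup>T * M * W2"
    by (rule mult_minus_distrib_mat[OF MM W1 W2])
  also have "\<dots> = 0\<^sub>m c d" unfolding z by (rule minus_r_inv_mat) (use MM W2 in auto)
  finally have "M * (W1 - W2) = 0\<^sub>m a d" by (rule mtm_cancel[OF M W12])
  hence "M * W1 - M * W2 = 0\<^sub>m a d" unfolding mult_minus_distrib_mat[OF M W1 W2] .
  moreover have "M * W1 \<in> carrier_mat a d" "M * W2 \<in> carrier_mat a d" using M W1 W2 by auto
  ultimately show ?thesis using mat_eq_of_minus by blast
qed

lemma sym_ginv:
  fixes B :: "real mat"
  assumes B: "B \<in> carrier_mat c c" and sym: "B\<^sup>T = B"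
  shows "\<exists>H \<in> carrier_mat c c. H\<^sup>T = H \<and> B * H * B = B"
proof -
  obtain G where G: "G \<in> carrier_mat c c" and BGB: "B * G * B = B" using ginv_exists[OF B] by auto
  have "(B * G * B)\<^sup>T = B * (G\<^sup>T * B)" using B G sym by (simp add: mtrans)
  hence BGtB: "B * (G\<^sup>T * B) = B" using BGB sym by simp
  have BGB': "B * (G * B) = B" using BGB B G by (simp add: massoc)
  define H where "H = G\<^sup>T * B * G"
  have "H\<^sup>T = H" unfolding H_def using B G sym by (simp add: mtrans massoc)
  moreover have "B * H * B = B"
  proof -
    have "B * H * B = B * (G\<^sup>T * B) * (G * B)" unfolding H_def using B G by (simp add: massoc)
    also have "\<dots> = B" using BGtB BGB' by simp
    finally show ?thesis .
  qed
  moreover have "H \<in> carrier_mat c c" unfolding H_def using B G by auto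
  ultimately show ?thesis by auto
qed

lemma pinv_exists:
  fixes A :: "real mat"
  assumes A: "A \<in> carrier_mat a c"
  shows "\<exists>V. is_pinv A V"
proof -
  have AT: "A\<^sup>T \<in> carrier_mat c a" using A by auto
  obtain H1 where H1: "H1 \<in> carrier_mat c c" "H1\<^sup>T = H1" "A\<^sup>T * A * H1 * (A\<^sup>T * A) = A\<^sup>T * A"
    using sym_ginv[of "A\<^sup>T * A" c] A by (auto simp: mtrans)
  obtain H2 where H2: "H2 \<in> carrier_mat a a" "H2\<^sup>T = H2" "A * A\<^sup>T * H2 * (A * A\<^sup>T) = A * A\<^sup>T"
    using sym_ginv[of "A * A\<^sup>T" a] A by (auto simp: mtrans)
  have "A\<^sup>T * A * (H1 * (A\<^sup>T * A)) = A\<^sup>T * A * 1\<^sub>m c"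
    using H1 A by (simp add: massoc)
  hence F1: "A * (H1 * (A\<^sup>T * A)) = A"
    using mtm_cancel2[OF A, of "H1 * (A\<^sup>T * A)" c "1\<^sub>m c"] A H1 by auto
  have "(A\<^sup>T)\<^sup>T * A\<^sup>T * (H2 * (A * A\<^sup>T)) = (A\<^sup>T)\<^sup>T * A\<^sup>T * 1\<^sub>m a"
    using H2 A by (simp add: massoc)
  hence "A\<^sup>T * (H2 * (A * A\<^sup>T)) = A\<^sup>T"
    using mtm_cancel2[OF AT, of "H2 * (A * A\<^sup>T)" a "1\<^sub>m a"] A H2 by auto
  hence "(A\<^sup>T * (H2 * (A * A\<^sup>T)))\<^sup>T = A" by simp
  hence F2: "A * (A\<^sup>T * (H2 * A)) = A" using A H2 by (simp add: mtrans massoc)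
  have F2t: "A * (A\<^sup>T * (H2 * (A * Y))) = A * Y" if Y: "dim_row Y = c" for Y
  proof -
    have "A * (A\<^sup>T * (H2 * (A * Y))) = (A * (A\<^sup>T * (H2 * A))) * Y" using A H2 Y by (simp add: massoc)
    thus ?thesis using F2 by simp
  qed
  define V where "V = A\<^sup>T * H2 * A * H1 * A\<^sup>T"
  have V: "V \<in> carrier_mat c a" unfolding V_def using A H1 H2 by auto
  have AV: "A * V = A * (H1 * A\<^sup>T)" unfolding V_def using A H1 H2 by (simp add: massoc F2t)
  have VA: "V * A = A\<^sup>T * (H2 * A)" unfolding V_def using A H1 H2 by (simp add: massoc F1)
  have 1: "A * V * A = A" unfolding AV using A H1 by (simp add: massoc F1)
  have 2: "V * A * V = V" unfolding VA unfolding V_def using A H1 H2 by (simp add: massoc F2t)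
  have 3: "(A * V)\<^sup>T = A * V" unfolding AV using A H1 by (simp add: mtrans massoc)
  have 4: "(V * A)\<^sup>T = V * A" unfolding VA using A H2 by (simp add: mtrans massoc)
  have "is_pinv A V" unfolding is_pinv_def using V A 1 2 3 4 by (simp only: carrier_matD)
  thus ?thesis by blast
qed

lemma pinv_unique:
  assumes V1: "is_pinv A V1" and V2: "is_pinv A V2"
  shows "V1 = V2"
proof -
  define a c where "a = dim_row A" and "c = dim_col A"
  have A: "A \<in> carrier_mat a c" unfolding a_def c_def by auto
  from V1 have v1: "V1 \<in> carrier_mat c a" "A * V1 * A = A" "V1 * A * V1 = V1" "(A * V1)\<^sup>T = A * V1" "(V1 * A)\<^sup>T = V1 * A"
    unfolding is_pinv_def a_def c_def by auto
  from V2 have v2: "V2 \<in> carrier_mat c a" "A * V2 * A = A" "V2 * A * V2 = V2" "(A * V2)\<^sup>T = A * V2" "(V2 * A)\<^sup>T = V2 * A"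
    unfolding is_pinv_def a_def c_def by auto
  have AT1: "A\<^sup>T = A\<^sup>T * (A * V2)"
  proof -
    have "A\<^sup>T = (A * V2 * A)\<^sup>T" using v2 by simp
    also have "\<dots> = A\<^sup>T * (A * V2)\<^sup>T" by (rule mtrans) (use A v2 in auto)
    finally show ?thesis by (simp only: v2(4))
  qed
  have AT2: "A\<^sup>T = (V1 * A) * A\<^sup>T"
  proof -
    have "A\<^sup>T = (A * (V1 * A))\<^sup>T" using v1 A by (simp add: massoc)
    also have "\<dots> = (V1 * A)\<^sup>T * A\<^sup>T" by (rule mtrans) (use A v1 in auto)
    finally show ?thesis by (simp only: v1(5))
  qed
  have T1: "(A * V1)\<^sup>T = V1\<^sup>T * A\<^sup>T" by (rule mtrans) (use A v1 in auto)
  have T2: "(V2 * A)\<^sup>T = A\<^sup>T * V2\<^sup>T" by (rule mtrans) (use A v2 in auto)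
  have S1: "V1\<^sup>T * A\<^sup>T = A * V1" using T1 v1(4) by metis
  have S2: "A\<^sup>T * V2\<^sup>T = V2 * A" using T2 v2(5) by metis
  have e1: "V1 = V1 * A * V2"
  proof -
    have "V1 = V1 * (A * V1)" using v1 A by (simp add: massoc)
    also have "\<dots> = V1 * (V1\<^sup>T * A\<^sup>T)" by (simp only: S1)
    also have "\<dots> = V1 * (V1\<^sup>T * (A\<^sup>T * (A * V2)))" using AT1 by simp
    also have "\<dots> = V1 * ((V1\<^sup>T * A\<^sup>T) * (A * V2))" using v1(1) v2(1) A by (simp add: massoc)
    also have "\<dots> = V1 * ((A * V1) * (A * V2))" by (simp only: S1)
    also have "\<dots> = (V1 * A * V1) * (A * V2)" using v1(1) v2(1) A by (simp add: massoc)
    also have "\<dots> = V1 * (A * V2)" using v1(3) by simp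
    also have "\<dots> = V1 * A * V2" using v1(1) v2(1) A by (simp add: massoc)
    finally show ?thesis .
  qed
  have e2: "V2 = V1 * A * V2"
  proof -
    have "V2 = (V2 * A) * V2" using v2 A by (simp add: massoc)
    also have "\<dots> = (A\<^sup>T * V2\<^sup>T) * V2" by (simp only: S2)
    also have "\<dots> = ((V1 * A) * A\<^sup>T * V2\<^sup>T) * V2" using AT2 by simp
    also have "\<dots> = V1 * A * (A\<^sup>T * V2\<^sup>T) * V2" using v1(1) v2(1) A by (simp add: massoc)
    also have "\<dots> = V1 * A * (V2 * A) * V2" by (simp only: S2)
    also have "\<dots> = (V1 * A) * (V2 * A * V2)" using v1(1) v2(1) A by (simp add: massoc)
    also have "\<dots> = V1 * A * V2" using v2(3) by simp
    finally show ?thesis .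
  qed
  show ?thesis using e1 e2 by simp
qed

lemma pinv_is_pinv: "is_pinv A (pinv A)"
proof -
  obtain V where V: "is_pinv A V" using pinv_exists[of A "dim_row A" "dim_col A"] by auto
  have "\<And>W. is_pinv A W \<Longrightarrow> W = V" using pinv_unique[OF _ V] .
  from theI[of "is_pinv A" V, OF V this] show ?thesis unfolding pinv_def .
qed

lemma sum_split:
  fixes k r :: nat and f :: "nat \<Rightarrow> real"
  shows "(\<Sum>j<k*r. (f j :: real)) = (\<Sum>l<k. \<Sum>c<r. f (l*r + c))"
proof (induction k)
  case (Suc k)
  have "(\<Sum>j<Suc k * r. f j) = (\<Sum>j<k*r. f j) + (\<Sum>j\<in>{k*r..<k*r+r}. f j)"
  proof -
    have "(\<Sum>j<Suc k * r. f j) = sum f {0..<k*r+r}" by (simp add: lessThan_atLeast0 add.commute)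
    also have "\<dots> = sum f {0..<k*r} + sum f {k*r..<k*r+r}"
      by (rule sum.atLeastLessThan_concat[symmetric]) auto
    finally show ?thesis by (simp add: lessThan_atLeast0)
  qed
  also have "(\<Sum>j\<in>{k*r..<k*r+r}. f j) = (\<Sum>c<r. f (k*r + c))"
    using sum.shift_bounds_nat_ivl[of f 0 "k*r" r] by (simp add: lessThan_atLeast0 add.commute)
  finally show ?case using Suc by simp
qed simp

definition coef :: "nat \<Rightarrow> real vec \<Rightarrow> nat \<Rightarrow> nat \<Rightarrow> real" where
  "coef r z l j = z $ (l * r + (j - 1))"

definition Ahat :: "nat \<Rightarrow> nat \<Rightarrow> (nat \<Rightarrow> real mat) \<Rightarrow> real vec \<Rightarrow> nat \<Rightarrow> real mat" where
  "Ahat n r S z l = lin_comb n r S (coef r z l)"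

lemma lin_comb_carrier[simp]: "lin_comb n r S c \<in> carrier_mat n n"
  unfolding lin_comb_def by auto

lemma lin_comb_index: "a < n \<Longrightarrow> b < n \<Longrightarrow> lin_comb n r S c $$ (a,b) = (\<Sum>l<r. c (Suc l) * S (Suc l) $$ (a,b))"
proof -
  assume "a < n" "b < n"
  hence "lin_comb n r S c $$ (a,b) = (\<Sum>l\<in>{Suc 0..r}. c l * S l $$ (a,b))" unfolding lin_comb_def by simp
  also have "\<dots> = (\<Sum>l<r. c (Suc l) * S (Suc l) $$ (a,b))" by (rule sum.atLeast1_atMost_eq)
  finally show ?thesis .
qed

lemma rblk:
  assumes i: "i < k" and z: "z \<in> carrier_vec (k*r)" and a: "a < r"
  shows "(kron (unit_row k (k - i)) (1\<^sub>m r) *\<^sub>v z) $ a = z $ ((k-1-i)*r + a)"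
    "kron (unit_row k (k - i)) (1\<^sub>m r) *\<^sub>v z \<in> carrier_vec r"
proof -
  let ?M = "kron (unit_row k (k - i)) (1\<^sub>m r)"
  have dims: "dim_row ?M = r" "dim_col ?M = k * r" unfolding kron_def unit_row_def by auto
  show "?M *\<^sub>v z \<in> carrier_vec r" by (intro carrier_vecI) (simp only: dim_mult_mat_vec dims)
  have ent: "?M $$ (a, j) = (if j = (k-1-i)*r + a then 1 else 0)" if j: "j < k*r" for j
  proof -
    have r0: "r > 0" using a by auto
    have jd: "j div r < k" using j by (simp add: less_mult_imp_div_less)
    have "?M $$ (a, j) = unit_row k (k - i) $$ (a div r, j div r) * (1\<^sub>m r) $$ (a mod r, j mod r)"
      unfolding kron_def unit_row_def using a j by auto
    also have "\<dots> = (if j div r = k - i - 1 \<and> a = j mod r then 1 else 0)"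
      unfolding unit_row_def using a jd r0 by auto
    also have "(j div r = k - i - 1 \<and> a = j mod r) \<longleftrightarrow> j = (k-1-i)*r + a"
    proof
      assume "j div r = k - i - 1 \<and> a = j mod r"
      thus "j = (k-1-i)*r + a" using div_mult_mod_eq[of j r] by simp
    next
      assume j: "j = (k-1-i)*r + a"
      have "j div r = k - 1 - i" unfolding j using a r0 by simp
      moreover have "j mod r = a" unfolding j using a r0 by simp
      ultimately show "j div r = k - i - 1 \<and> a = j mod r" by simp
    qed
    finally show ?thesis by simp
  qed
  have "(?M *\<^sub>v z) $ a = (\<Sum>j\<in>{0..<k*r}. ?M $$ (a,j) * z $ j)"
    using dims a z by (simp add: scalar_prod_def row_def)
  also have "\<dots> = (\<Sum>j\<in>{0..<k*r}. if j = (k-1-i)*r + a then z $ j else 0)"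
    by (rule sum.cong) (auto simp: ent)
  also have "\<dots> = z $ ((k-1-i)*r + a)"
  proof -
    have "(k-1-i)*r + a < k * r"
    proof -
      have "(k-1-i)*r + a < (k-1-i)*r + r" using a by simp
      also have "\<dots> = (k - 1 - i + 1) * r" by simp
      also have "\<dots> = (k - i) * r" using i by (simp add: Suc_diff_Suc)
      also have "\<dots> \<le> k * r" by simp
      finally show ?thesis .
    qed
    thus ?thesis by simp
  qed
  finally show "(?M *\<^sub>v z) $ a = z $ ((k-1-i)*r + a)" .
qed

lemma lin_comb_dims[simp]: "dim_row (lin_comb n r S c) = n" "dim_col (lin_comb n r S c) = n"
  unfolding lin_comb_def by auto

lemma idx_all:
  "(\<forall>q<m*n. P (q mod n) (q div (n::nat))) \<longleftrightarrow> (\<forall>a<n. \<forall>b<m. P a b)"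
proof
  assume H: "\<forall>q<m*n. P (q mod n) (q div n)"
  show "\<forall>a<n. \<forall>b<m. P a b"
  proof (intro allI impI)
    fix a b assume a: "a < n" and b: "b < m"
    have "a + n * b < n + n * b" using a by simp
    also have "\<dots> = n * (b + 1)" by (simp add: algebra_simps)
    also have "\<dots> \<le> n * m" using b by (intro mult_le_mono2) simp
    finally have "a + n * b < m * n" by (simp add: mult.commute)
    from H[rule_format, OF this] show "P a b" using a by simp
  qed
next
  assume H: "\<forall>a<n. \<forall>b<m. P a b"
  show "\<forall>q<m*n. P (q mod n) (q div n)"
  proof (intro allI impI)
    fix q assume q: "q < m * n"
    hence n0: "n > 0" by (cases "n = 0") auto
    have "q mod n < n" using n0 by simp
    moreover have "q div n < m" using q by (simp add: less_mult_imp_div_less)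
    ultimately show "P (q mod n) (q div n)" using H by blast
  qed
qed

lemma vecm_index: "A \<in> carrier_mat n c \<Longrightarrow> q < n * c \<Longrightarrow> vecm A $ q = A $$ (q mod n, q div n)"
  unfolding vecm_def by simp

lemma vecm_dim: "A \<in> carrier_mat n c \<Longrightarrow> dim_vec (vecm A) = n * c"
  unfolding vecm_def by simp

lemma Pmat_index:
  assumes Sc: "\<forall>l\<in>{1..r}. S l \<in> carrier_mat n n" and q: "q < n*n" and l: "l < r"
  shows "Pmat n r S $$ (q,l) = S (Suc l) $$ (q mod n, q div n)"
proof -
  have "S (Suc l) \<in> carrier_mat n n" using Sc l by auto
  thus ?thesis unfolding Pmat_def using q l by (simp add: vecm_index)
qed

lemma Pmat_dims: "dim_row (Pmat n r S) = n * n" "dim_col (Pmat n r S) = r"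
  unfolding Pmat_def by auto

lemma PW:
  assumes Sc: "\<forall>l\<in>{1..r}. S l \<in> carrier_mat n n" and w: "w \<in> carrier_vec r" and q: "q < n*n"
  shows "(Pmat n r S *\<^sub>v w) $ q = (\<Sum>l<r. w $ l * S (Suc l) $$ (q mod n, q div n))"
proof -
  have "(Pmat n r S *\<^sub>v w) $ q = (\<Sum>l\<in>{0..<r}. Pmat n r S $$ (q,l) * w $ l)"
    using q w by (simp add: Pmat_dims scalar_prod_def)
  also have "\<dots> = (\<Sum>l<r. w $ l * S (Suc l) $$ (q mod n, q div n))"
    by (rule sum.cong) (auto simp: Pmat_index[OF Sc q] lessThan_atLeast0)
  finally show ?thesis .
qed

lemma VP:
  assumes Sc: "\<forall>l\<in>{1..r}. S l \<in> carrier_mat n n" and w: "w \<in> carrier_vec r" and A: "A \<in> carrier_mat n n"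
  shows "vecm A = Pmat n r S *\<^sub>v w \<longleftrightarrow> A = lin_comb n r S (\<lambda>j. w $ (j - 1))"
proof -
  let ?Q = "\<lambda>a b. A $$ (a,b) = (\<Sum>l<r. w $ l * S (Suc l) $$ (a, b))"
  have "vecm A = Pmat n r S *\<^sub>v w \<longleftrightarrow> (\<forall>q<n*n. ?Q (q mod n) (q div n))"
  proof
    assume e: "vecm A = Pmat n r S *\<^sub>v w"
    show "\<forall>q<n*n. ?Q (q mod n) (q div n)"
    proof (intro allI impI)
      fix q assume q: "q < n * n"
      have "vecm A $ q = (Pmat n r S *\<^sub>v w) $ q" using e by simp
      thus "?Q (q mod n) (q div n)" using vecm_index[OF A q] PW[OF Sc w q] by simp
    qed
  next
    assume H: "\<forall>q<n*n. ?Q (q mod n) (q div n)"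
    show "vecm A = Pmat n r S *\<^sub>v w"
    proof (rule eq_vecI)
      show "dim_vec (vecm A) = dim_vec (Pmat n r S *\<^sub>v w)" using vecm_dim[OF A] by (simp add: Pmat_dims)
      fix q assume "q < dim_vec (Pmat n r S *\<^sub>v w)"
      hence q: "q < n * n" by (simp add: Pmat_dims)
      show "vecm A $ q = (Pmat n r S *\<^sub>v w) $ q" using vecm_index[OF A q] PW[OF Sc w q] H q by simp
    qed
  qed
  also have "\<dots> \<longleftrightarrow> (\<forall>a<n. \<forall>b<n. ?Q a b)" by (rule idx_all)
  also have "\<dots> \<longleftrightarrow> A = lin_comb n r S (\<lambda>j. w $ (j - 1))"
  proof
    assume H: "\<forall>a<n. \<forall>b<n. ?Q a b"
    show "A = lin_comb n r S (\<lambda>j. w $ (j - 1))"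
    proof (rule eq_matI)
      fix a b assume "a < dim_row (lin_comb n r S (\<lambda>j. w $ (j - 1)))" "b < dim_col (lin_comb n r S (\<lambda>j. w $ (j - 1)))"
      hence ab: "a < n" "b < n" by simp_all
      show "A $$ (a,b) = lin_comb n r S (\<lambda>j. w $ (j - 1)) $$ (a,b)"
        using H ab by (simp add: lin_comb_index)
    qed (use A lin_comb_carrier[of n r S] in auto)
  next
    assume e: "A = lin_comb n r S (\<lambda>j. w $ (j - 1))"
    show "\<forall>a<n. \<forall>b<n. ?Q a b" unfolding e by (simp add: lin_comb_index)
  qed
  finally show ?thesis .
qed

lemma KP:
  assumes Sc: "\<forall>l\<in>{1..r}. S l \<in> carrier_mat n n" and Y: "Y \<in> carrier_mat n m"
    and q: "q < m*n" and c: "c < r"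
  shows "(kron (Y\<^sup>T) (1\<^sub>m n) * Pmat n r S) $$ (q,c) = (\<Sum>d<n. Y $$ (d, q div n) * S (Suc c) $$ (q mod n, d))"
proof -
  define K where "K = kron (Y\<^sup>T) (1\<^sub>m n)"
  have Kd: "dim_row K = m * n" "dim_col K = n * n" unfolding K_def kron_def using Y by auto
  have n0: "n > 0" using q by (cases "n = 0") auto
  have qb: "q div n < m" using q by (simp add: less_mult_imp_div_less)
  have qa: "q mod n < n" using n0 by simp
  have Kent: "K $$ (q,s) = Y $$ (s div n, q div n) * (if q mod n = s mod n then 1 else 0)" if s: "s < n*n" for s
  proof -
    have sd: "s div n < n" using s by (simp add: less_mult_imp_div_less)
    have sm: "s mod n < n" using n0 by simp
    show ?thesis unfolding K_def kron_def using Y q s sd sm qb qa by simp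
  qed
  have "(K * Pmat n r S) $$ (q,c) = (\<Sum>s\<in>{0..<n*n}. K $$ (q,s) * Pmat n r S $$ (s,c))"
    using Kd q c by (simp add: Pmat_dims scalar_prod_def)
  also have "\<dots> = (\<Sum>s<n*n. Y $$ (s div n, q div n) * (if q mod n = s mod n then 1 else 0) * S (Suc c) $$ (s mod n, s div n))"
    by (rule sum.cong) (auto simp: lessThan_atLeast0 Kent Pmat_index[OF Sc _ c])
  also have "\<dots> = (\<Sum>d<n. \<Sum>a<n. Y $$ ((d*n+a) div n, q div n) * (if q mod n = (d*n+a) mod n then 1 else 0) * S (Suc c) $$ ((d*n+a) mod n, (d*n+a) div n))"
    by (rule sum_split)
  also have "\<dots> = (\<Sum>d<n. \<Sum>a<n. if a = q mod n then Y $$ (d, q div n) * S (Suc c) $$ (q mod n, d) else 0)"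
    by (rule sum.cong[OF refl], rule sum.cong[OF refl]) auto
  also have "\<dots> = (\<Sum>d<n. Y $$ (d, q div n) * S (Suc c) $$ (q mod n, d))"
    using qa by simp
  finally show ?thesis unfolding K_def .
qed

lemma Ahat_index:
  assumes a: "a < n" and d: "d < n"
  shows "Ahat n r S z l $$ (a,d) = (\<Sum>c<r. z $ (l*r + c) * S (Suc c) $$ (a,d))"
  unfolding Ahat_def using a d by (simp add: lin_comb_index coef_def)

lemma Ahat_dims[simp]: "dim_row (Ahat n r S z l) = n" "dim_col (Ahat n r S z l) = n"
  unfolding Ahat_def by simp_all

lemma mult_idx: "i < dim_row A \<Longrightarrow> j < dim_col B \<Longrightarrow> dim_col A = dim_row B \<Longrightarrow>
  (A * B) $$ (i,j) = (\<Sum>d<dim_row B. A $$ (i,d) * B $$ (d,j))"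
  by (simp add: scalar_prod_def lessThan_atLeast0)

lemma UZ:
  assumes Sc: "\<forall>l\<in>{1..r}. S l \<in> carrier_mat n n" and X: "X \<in> carrier_mat n m" and E: "E \<in> carrier_mat m m"
    and z: "z \<in> carrier_vec (k*r)" and q: "q < m*n"
  shows "(Umat k n m r (Pmat n r S) X E *\<^sub>v z) $ q
     = (\<Sum>l<k. (Ahat n r S z l * (X * E ^\<^sub>m (k-1-l))) $$ (q mod n, q div n))"
proof -
  let ?U = "Umat k n m r (Pmat n r S) X E"
  let ?Y = "\<lambda>l. X * E ^\<^sub>m (k-1-l)"
  have Yc: "?Y l \<in> carrier_mat n m" for l using X E by auto
  have n0: "n > 0" using q by (cases "n = 0") auto
  have qb: "q div n < m" using q by (simp add: less_mult_imp_div_less)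
  have qa: "q mod n < n" using n0 by simp
  have Ud: "dim_row ?U = m * n" "dim_col ?U = k * r" unfolding Umat_def by auto
  have Uent: "?U $$ (q, l*r+c) = (\<Sum>d<n. ?Y l $$ (d, q div n) * S (Suc c) $$ (q mod n, d))"
    if l: "l < k" and c: "c < r" for l c
  proof -
    have lt: "l*r+c < k*r"
    proof -
      have "l*r+c < l*r + r" using c by simp
      also have "\<dots> = (l+1)*r" by simp
      also have "\<dots> \<le> k*r" using l by (intro mult_le_mono1) simp
      finally show ?thesis .
    qed
    have dv: "(l*r+c) div r = l" and md: "(l*r+c) mod r = c" using c by auto
    have "?U $$ (q, l*r+c) = (kron ((?Y l)\<^sup>T) (1\<^sub>m n) * Pmat n r S) $$ (q, c)"
      unfolding Umat_def using q lt by (simp only: index_mat split dv md)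
    also have "\<dots> = (\<Sum>d<n. ?Y l $$ (d, q div n) * S (Suc c) $$ (q mod n, d))"
      by (rule KP[OF Sc Yc q c])
    finally show ?thesis .
  qed
  have "(?U *\<^sub>v z) $ q = (\<Sum>j\<in>{0..<k*r}. ?U $$ (q,j) * z $ j)"
    using q z by (simp add: Ud scalar_prod_def)
  also have "\<dots> = (\<Sum>j<k*r. ?U $$ (q,j) * z $ j)" by (simp add: lessThan_atLeast0)
  also have "\<dots> = (\<Sum>l<k. \<Sum>c<r. ?U $$ (q,l*r+c) * z $ (l*r+c))" by (rule sum_split)
  also have "\<dots> = (\<Sum>l<k. \<Sum>c<r. \<Sum>d<n. ?Y l $$ (d, q div n) * S (Suc c) $$ (q mod n, d) * z $ (l*r+c))"
    by (rule sum.cong[OF refl], rule sum.cong[OF refl]) (simp add: Uent sum_distrib_right)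
  also have "\<dots> = (\<Sum>l<k. (Ahat n r S z l * ?Y l) $$ (q mod n, q div n))"
  proof (rule sum.cong[OF refl])
    fix l assume "l \<in> {..<k}"
    have Yd: "dim_row (?Y l) = n" "dim_col (?Y l) = m" using carrier_matD[OF Yc[of l]] by auto
    have "(Ahat n r S z l * ?Y l) $$ (q mod n, q div n) = (\<Sum>d<dim_row (?Y l). Ahat n r S z l $$ (q mod n, d) * ?Y l $$ (d, q div n))"
      by (rule mult_idx) (use qa qb Yd in \<open>simp_all\<close>)
    also have "\<dots> = (\<Sum>d\<in>{0..<n}. Ahat n r S z l $$ (q mod n, d) * ?Y l $$ (d, q div n))"
      by (simp only: Yd lessThan_atLeast0)
    also have "\<dots> = (\<Sum>d<n. \<Sum>c<r. z $ (l*r + c) * S (Suc c) $$ (q mod n, d) * ?Y l $$ (d, q div n))"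
      by (rule sum.cong) (auto simp: lessThan_atLeast0 Ahat_index[OF qa] sum_distrib_right)
    also have "\<dots> = (\<Sum>c<r. \<Sum>d<n. z $ (l*r + c) * S (Suc c) $$ (q mod n, d) * ?Y l $$ (d, q div n))"
      by (rule sum.swap)
    finally show "(\<Sum>c<r. \<Sum>d<n. ?Y l $$ (d, q div n) * S (Suc c) $$ (q mod n, d) * z $ (l*r+c))
       = (Ahat n r S z l * ?Y l) $$ (q mod n, q div n)"
      by (simp add: ac_simps)
  qed
  finally show ?thesis .
qed

lemma msum_index: "a < nr \<Longrightarrow> b < nc \<Longrightarrow> msum nr nc k F $$ (a,b) = (\<Sum>i<k. F i $$ (a,b))"
  unfolding msum_def by simp

lemma msum_cong: "(\<And>i. i < k \<Longrightarrow> F i = G i) \<Longrightarrow> msum nr nc k F = msum nr nc k G"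
  unfolding msum_def by (intro arg_cong[where f = "mat nr nc"] ext sum.cong) auto

lemma G_eq:
  assumes X: "X \<in> carrier_mat n m" and E: "E \<in> carrier_mat m m" and a: "a < n" and b: "b < m"
  shows "(\<Sum>i<k. (Ahat n r S z (k-1-i) * X * E ^\<^sub>m i) $$ (a,b))
       = (\<Sum>l<k. (Ahat n r S z l * (X * E ^\<^sub>m (k-1-l))) $$ (a,b))"
proof -
  let ?g = "\<lambda>l. (Ahat n r S z l * (X * E ^\<^sub>m (k-1-l))) $$ (a,b)"
  have "(\<Sum>i<k. (Ahat n r S z (k-1-i) * X * E ^\<^sub>m i) $$ (a,b)) = (\<Sum>i<k. ?g (k - Suc i))"
  proof (rule sum.cong[OF refl])
    fix i assume "i \<in> {..<k}"
    hence i: "i < k" by simp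
    have e: "k - 1 - (k - Suc i) = i" using i by simp
    have Ec: "E ^\<^sub>m i \<in> carrier_mat m m" using E by simp
    have Ac: "Ahat n r S z (k-1-i) \<in> carrier_mat n n" unfolding Ahat_def by simp
    have "Ahat n r S z (k-1-i) * X * E ^\<^sub>m i = Ahat n r S z (k-1-i) * (X * E ^\<^sub>m i)"
      by (rule assoc_mult_mat[OF Ac X Ec])
    thus "(Ahat n r S z (k-1-i) * X * E ^\<^sub>m i) $$ (a,b) = ?g (k - Suc i)"
      by (simp only: e) simp
  qed
  also have "\<dots> = (\<Sum>l<k. ?g l)" by (rule sum.nat_diff_reindex)
  finally show ?thesis .
qed

lemma KEY:
  assumes Sc: "\<forall>l\<in>{1..r}. S l \<in> carrier_mat n n" and X: "X \<in> carrier_mat n m" and E: "E \<in> carrier_mat m m"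
    and z: "z \<in> carrier_vec (k*r)"
  shows "(Umat k n m r (Pmat n r S) X E *\<^sub>v z = vecm (- (X * E ^\<^sub>m k)))
     \<longleftrightarrow> msum n m k (\<lambda>i. Ahat n r S z (k-1-i) * X * E ^\<^sub>m i) = - (X * E ^\<^sub>m k)"
proof -
  let ?U = "Umat k n m r (Pmat n r S) X E"
  let ?R = "- (X * E ^\<^sub>m k)"
  let ?G = "\<lambda>a b. (\<Sum>l<k. (Ahat n r S z l * (X * E ^\<^sub>m (k-1-l))) $$ (a,b))"
  have Rc: "?R \<in> carrier_mat n m" using X E by auto
  have Ud: "dim_row ?U = m * n" unfolding Umat_def by simp
  have "?U *\<^sub>v z = vecm ?R \<longleftrightarrow> (\<forall>q<m*n. ?G (q mod n) (q div n) = ?R $$ (q mod n, q div n))"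
  proof
    assume e: "?U *\<^sub>v z = vecm ?R"
    show "\<forall>q<m*n. ?G (q mod n) (q div n) = ?R $$ (q mod n, q div n)"
    proof (intro allI impI)
      fix q assume q: "q < m * n"
      have q': "q < n * m" using q by (simp add: mult.commute)
      have "(?U *\<^sub>v z) $ q = vecm ?R $ q" using e by simp
      thus "?G (q mod n) (q div n) = ?R $$ (q mod n, q div n)"
        using UZ[OF Sc X E z q] vecm_index[OF Rc q'] by simp
    qed
  next
    assume H: "\<forall>q<m*n. ?G (q mod n) (q div n) = ?R $$ (q mod n, q div n)"
    show "?U *\<^sub>v z = vecm ?R"
    proof (rule eq_vecI)
      show "dim_vec (?U *\<^sub>v z) = dim_vec (vecm ?R)" using vecm_dim[OF Rc] Ud by (simp add: mult.commute)
      fix q assume "q < dim_vec (vecm ?R)"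
      hence q': "q < n * m" using vecm_dim[OF Rc] by simp
      hence q: "q < m * n" by (simp add: mult.commute)
      show "(?U *\<^sub>v z) $ q = vecm ?R $ q"
        using UZ[OF Sc X E z q] vecm_index[OF Rc q'] H q by simp
    qed
  qed
  also have "\<dots> \<longleftrightarrow> (\<forall>a<n. \<forall>b<m. ?G a b = ?R $$ (a,b))" by (rule idx_all)
  also have "\<dots> \<longleftrightarrow> msum n m k (\<lambda>i. Ahat n r S z (k-1-i) * X * E ^\<^sub>m i) = ?R"
  proof
    assume H: "\<forall>a<n. \<forall>b<m. ?G a b = ?R $$ (a,b)"
    show "msum n m k (\<lambda>i. Ahat n r S z (k-1-i) * X * E ^\<^sub>m i) = ?R"
    proof (rule eq_matI)
      fix a b assume "a < dim_row ?R" "b < dim_col ?R"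
      hence a: "a < n" and b: "b < m" using Rc by auto
      show "msum n m k (\<lambda>i. Ahat n r S z (k-1-i) * X * E ^\<^sub>m i) $$ (a,b) = ?R $$ (a,b)"
        using msum_index[OF a b] G_eq[OF X E a b] H a b by simp
    qed (use Rc in \<open>auto simp: msum_def\<close>)
  next
    assume e: "msum n m k (\<lambda>i. Ahat n r S z (k-1-i) * X * E ^\<^sub>m i) = ?R"
    show "\<forall>a<n. \<forall>b<m. ?G a b = ?R $$ (a,b)"
    proof (intro allI impI)
      fix a b assume a: "a < n" and b: "b < m"
      have "msum n m k (\<lambda>i. Ahat n r S z (k-1-i) * X * E ^\<^sub>m i) $$ (a,b) = ?R $$ (a,b)" using e by simp
      thus "?G a b = ?R $$ (a,b)" using msum_index[OF a b] G_eq[OF X E a b] by simp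
    qed
  qed
  finally show ?thesis .
qed

lemma lin_comb_cong: "(\<And>t. t \<in> {1..r} \<Longrightarrow> c t = c' t) \<Longrightarrow> lin_comb n r S c = lin_comb n r S c'"
  unfolding lin_comb_def by (intro arg_cong[where f = "mat n n"] ext) (auto intro!: sum.cong)

lemma INJ:
  assumes basis: "is_basis n r S" and z1: "z1 \<in> carrier_vec (k*r)" and z2: "z2 \<in> carrier_vec (k*r)"
    and eq: "\<And>l. l < k \<Longrightarrow> Ahat n r S z1 l = Ahat n r S z2 l"
  shows "z1 = z2"
proof (rule eq_vecI)
  show "dim_vec z1 = dim_vec z2" using z1 z2 by simp
  fix j assume "j < dim_vec z2"
  hence j: "j < k * r" using z2 by simp
  have r0: "r > 0" using j by (cases "r = 0") auto
  define l where "l = j div r"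
  define c where "c = j mod r"
  have l: "l < k" unfolding l_def using j by (simp add: less_mult_imp_div_less)
  have c: "c < r" unfolding c_def using r0 by simp
  have jlc: "j = l * r + c" unfolding l_def c_def by simp
  have "lin_comb n r S (\<lambda>t. coef r z1 l t - coef r z2 l t) = 0\<^sub>m n n"
  proof (rule eq_matI)
    fix a b assume "a < dim_row (0\<^sub>m n n :: real mat)" "b < dim_col (0\<^sub>m n n :: real mat)"
    hence a: "a < n" and b: "b < n" by auto
    have "Ahat n r S z1 l $$ (a,b) = Ahat n r S z2 l $$ (a,b)" using eq[OF l] by simp
    hence "(\<Sum>t\<in>{1..r}. coef r z1 l t * S t $$ (a,b)) = (\<Sum>t\<in>{1..r}. coef r z2 l t * S t $$ (a,b))"
      unfolding Ahat_def lin_comb_def using a b by simp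
    hence "(\<Sum>t\<in>{1..r}. (coef r z1 l t - coef r z2 l t) * S t $$ (a,b)) = 0"
      by (simp add: left_diff_distrib sum_subtractf)
    thus "lin_comb n r S (\<lambda>t. coef r z1 l t - coef r z2 l t) $$ (a,b) = (0\<^sub>m n n :: real mat) $$ (a,b)"
      unfolding lin_comb_def using a b by simp
  qed auto
  hence "\<forall>t\<in>{1..r}. coef r z1 l t - coef r z2 l t = 0" using basis unfolding is_basis_def by blast
  hence "coef r z1 l (Suc c) - coef r z2 l (Suc c) = 0" using c by auto
  thus "z1 $ j = z2 $ j" unfolding coef_def jlc by simp
qed

lemma REP:
  assumes A: "\<forall>i<k. A i \<in> span_L n r S"
  shows "\<exists>z \<in> carrier_vec (k*r). \<forall>i<k. A i = Ahat n r S z (k-1-i)"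
proof -
  have "\<forall>i. \<exists>c. i < k \<longrightarrow> A i = lin_comb n r S c" using A unfolding span_L_def by auto
  then obtain cf where cf: "\<And>i. i < k \<Longrightarrow> A i = lin_comb n r S (cf i)" by metis
  define z where "z = vec (k*r) (\<lambda>j. cf (k-1-j div r) (j mod r + 1))"
  have "\<forall>i<k. A i = Ahat n r S z (k-1-i)"
  proof (intro allI impI)
    fix i assume i: "i < k"
    show "A i = Ahat n r S z (k-1-i)" unfolding cf[OF i] Ahat_def
    proof (rule lin_comb_cong)
      fix t assume t: "t \<in> {1..r}"
      hence t1: "t - 1 < r" and tp: "t \<ge> 1" by auto
      have lt: "(k-1-i)*r + (t-1) < k*r"
      proof -
        have "(k-1-i)*r + (t-1) < (k-1-i)*r + r" using t1 by simp
        also have "\<dots> = (k-1-i+1)*r" by simp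
        also have "\<dots> \<le> k*r" using i by (intro mult_le_mono1) simp
        finally show ?thesis .
      qed
      have dv: "((k-1-i)*r + (t-1)) div r = k-1-i" and md: "((k-1-i)*r + (t-1)) mod r = t - 1"
        using t1 by auto
      have "coef r z (k-1-i) t = cf (k-1-(k-1-i)) (t - 1 + 1)"
        unfolding coef_def z_def using lt by (simp only: index_vec dv md)
      also have "\<dots> = cf i t" using i tp by simp
      finally show "cf i t = coef r z (k-1-i) t" by simp
    qed
  qed
  moreover have "z \<in> carrier_vec (k*r)" unfolding z_def by simp
  ultimately show ?thesis by blast
qed

lemma REPVEC:
  assumes Sc: "\<forall>l\<in>{1..r}. S l \<in> carrier_mat n n" and Ai: "Ai \<in> carrier_mat n n" and i: "i < k"
    and z: "z \<in> carrier_vec (k*r)"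
  shows "vecm Ai = Pmat n r S *\<^sub>v (kron (unit_row k (k - i)) (1\<^sub>m r) *\<^sub>v z) \<longleftrightarrow> Ai = Ahat n r S z (k-1-i)"
proof -
  let ?w = "kron (unit_row k (k - i)) (1\<^sub>m r) *\<^sub>v z"
  have w: "?w \<in> carrier_vec r" by (intro carrier_vecI) (simp add: kron_def unit_row_def)
  have "lin_comb n r S (\<lambda>j. ?w $ (j - 1)) = Ahat n r S z (k-1-i)"
    unfolding Ahat_def
  proof (rule lin_comb_cong)
    fix t assume "t \<in> {1..r}"
    hence t1: "t - 1 < r" by auto
    show "?w $ (t - 1) = coef r z (k-1-i) t" unfolding coef_def using rblk(1)[OF i z t1] .
  qed
  thus ?thesis using VP[OF Sc w Ai] by simp
qed

lemma LA_cons: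
  fixes U V :: "real mat"
  assumes U: "U \<in> carrier_mat N p" and V: "V \<in> carrier_mat p N" and UVU: "U * V * U = U"
    and z: "z \<in> carrier_vec p" and e: "U *\<^sub>v z = b"
  shows "U * V *\<^sub>v b = b"
proof -
  have UV: "U * V \<in> carrier_mat N N" using U V by simp
  have "U * V *\<^sub>v b = U * V *\<^sub>v (U *\<^sub>v z)" using e by simp
  also have "\<dots> = (U * V * U) *\<^sub>v z" by (rule assoc_mult_mat_vec[OF UV U z, symmetric])
  also have "\<dots> = b" using UVU e by simp
  finally show ?thesis .
qed

lemma LA_gen:
  fixes U V :: "real mat"
  assumes U: "U \<in> carrier_mat N p" and V: "V \<in> carrier_mat p N" and UVU: "U * V * U = U"
    and b: "b \<in> carrier_vec N" and c: "U * V *\<^sub>v b = b" and y: "y \<in> carrier_vec p"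
  shows "U *\<^sub>v (V *\<^sub>v b + (1\<^sub>m p - V * U) *\<^sub>v y) = b"
proof -
  have VU: "V * U \<in> carrier_mat p p" using U V by simp
  have M: "1\<^sub>m p - V * U \<in> carrier_mat p p" using VU by (rule minus_carrier_mat)
  have Vb: "V *\<^sub>v b \<in> carrier_vec p" using V b by simp
  have My: "(1\<^sub>m p - V * U) *\<^sub>v y \<in> carrier_vec p" using M y by simp
  have "U * (1\<^sub>m p - V * U) = U * 1\<^sub>m p - U * (V * U)" by (rule mult_minus_distrib_mat[OF U _ VU]) simp
  also have "\<dots> = U - U * V * U" using U V by simp
  also have "\<dots> = 0\<^sub>m N p" using UVU U by simp
  finally have Z: "U * (1\<^sub>m p - V * U) = 0\<^sub>m N p" .
  have "U *\<^sub>v (V *\<^sub>v b + (1\<^sub>m p - V * U) *\<^sub>v y) = U *\<^sub>v (V *\<^sub>v b) + U *\<^sub>v ((1\<^sub>m p - V * U) *\<^sub>v y)"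
    by (rule mult_add_distrib_mat_vec[OF U Vb My])
  also have "U *\<^sub>v (V *\<^sub>v b) = b" using c U V b by simp
  also have "U *\<^sub>v ((1\<^sub>m p - V * U) *\<^sub>v y) = (U * (1\<^sub>m p - V * U)) *\<^sub>v y" using U M y by simp
  also have "\<dots> = 0\<^sub>v N" unfolding Z by (rule eq_vecI) (use y in \<open>auto simp: scalar_prod_def\<close>)
  also have "b + 0\<^sub>v N = b" using b by simp
  finally show ?thesis .
qed

lemma LA_rep:
  fixes U V :: "real mat"
  assumes U: "U \<in> carrier_mat N p" and V: "V \<in> carrier_mat p N"
    and z: "z \<in> carrier_vec p" and e: "U *\<^sub>v z = b"
  shows "z = V *\<^sub>v b + (1\<^sub>m p - V * U) *\<^sub>v z"
proof -
  have VU: "V * U \<in> carrier_mat p p" using U V by simp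
  have "(1\<^sub>m p - V * U) *\<^sub>v z = 1\<^sub>m p *\<^sub>v z - (V * U) *\<^sub>v z"
    by (rule minus_mult_distrib_mat_vec[OF _ VU z]) simp
  also have "\<dots> = z - V *\<^sub>v b" using z U V e by simp
  finally have *: "(1\<^sub>m p - V * U) *\<^sub>v z = z - V *\<^sub>v b" .
  show ?thesis unfolding * by (rule eq_vecI) (use z V e in auto)
qed

lemma LA_inj:
  fixes U V :: "real mat"
  assumes U: "U \<in> carrier_mat N p" and V: "V \<in> carrier_mat p N" and VU: "V * U = 1\<^sub>m p"
    and z: "z \<in> carrier_vec p" and e: "U *\<^sub>v z = b"
  shows "z = V *\<^sub>v b"
proof -
  have "V *\<^sub>v b = (V * U) *\<^sub>v z" using e U V z by simp
  thus ?thesis using VU z by simp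
qed

lemma LA_VU:
  fixes U V :: "real mat"
  assumes U: "U \<in> carrier_mat N p" and V: "V \<in> carrier_mat p N"
    and H: "\<And>y. y \<in> carrier_vec p \<Longrightarrow> (1\<^sub>m p - V * U) *\<^sub>v y = 0\<^sub>v p"
  shows "V * U = 1\<^sub>m p"
proof (rule eq_matI)
  fix i j assume "i < dim_row (1\<^sub>m p :: real mat)" "j < dim_col (1\<^sub>m p :: real mat)"
  hence i: "i < p" and j: "j < p" by auto
  have M: "1\<^sub>m p - V * U \<in> carrier_mat p p" using U V by (intro minus_carrier_mat) simp
  have Z0: "((1\<^sub>m p - V * U) *\<^sub>v unit_vec p j) $ i = 0" using H[of "unit_vec p j"] i by simp
  have Md: "dim_row (1\<^sub>m p - V * U) = p" "dim_col (1\<^sub>m p - V * U) = p" using M by auto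
  have "((1\<^sub>m p - V * U) *\<^sub>v unit_vec p j) $ i = row (1\<^sub>m p - V * U) i \<bullet> unit_vec p j"
    using i Md by simp
  also have "\<dots> = row (1\<^sub>m p - V * U) i $ j" using j by simp
  also have "\<dots> = (1\<^sub>m p - V * U) $$ (i,j)" using i j Md by simp
  finally have "((1\<^sub>m p - V * U) *\<^sub>v unit_vec p j) $ i = (1\<^sub>m p - V * U) $$ (i,j)" .
  hence "(1\<^sub>m p - V * U) $$ (i,j) = 0" using Z0 by simp
  thus "(V * U) $$ (i,j) = 1\<^sub>m p $$ (i,j)" using U V i j by simp
qed (use U V in auto)

theorem theorem2:
  fixes k n m r t :: nat
    and S :: "nat \<Rightarrow> real mat"
    and \<alpha> \<beta> e :: "nat \<Rightarrow> real"
    and u v \<phi> :: "nat \<Rightarrow> real vec"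
  assumes "k \<ge> 1" "n \<ge> 1" "m \<ge> 1" "m \<le> k * n"
    and basis: "is_basis n r S"
    and t_le: "2 * t \<le> m"
    and beta_nz: "\<forall>j\<in>{1..t}. \<beta> j \<noteq> 0"
    and u_dim: "\<forall>j\<in>{1..t}. u j \<in> carrier_vec n"
    and v_dim: "\<forall>j\<in>{1..t}. v j \<in> carrier_vec n"
    and phi_dim: "\<forall>j\<in>{2*t+1..m}. \<phi> j \<in> carrier_vec n"
  defines "L \<equiv> span_L n r S"
    and "P \<equiv> Pmat n r S"
    and "E \<equiv> realform_E m t \<alpha> \<beta> e"
    and "X \<equiv> realform_X n m t u v \<phi>"
    and "U \<equiv> Umat k n m r (Pmat n r S) (realform_X n m t u v \<phi>) (realform_E m t \<alpha> \<beta> e)"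
    and "b \<equiv> vecm (- (realform_X n m t u v \<phi> * (realform_E m t \<alpha> \<beta> e ^\<^sub>m k)))"
  shows "((\<exists>A. is_solution k n m L X E A) \<longleftrightarrow> U * pinv U *\<^sub>v b = b)
    \<and> (U * pinv U *\<^sub>v b = b \<longrightarrow>
         (\<forall>A. is_solution k n m L X E A \<longleftrightarrow>
              ((\<forall>i<k. A i \<in> carrier_mat n n) \<and>
               (\<exists>y \<in> carrier_vec (k * r). \<forall>i<k.
                  vecm (A i) = P *\<^sub>v (kron (unit_row k (k - i)) (1\<^sub>m r) *\<^sub>v
                     (pinv U *\<^sub>v b + (1\<^sub>m (k * r) - pinv U * U) *\<^sub>v y))))))
    \<and> (((\<exists>A. is_solution k n m L X E A) \<and>
         (\<forall>A B. is_solution k n m L X E A \<longrightarrow> is_solution k n m L X E B \<longrightarrow> (\<forall>i<k. A i = B i)))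
        \<longleftrightarrow> (U * pinv U *\<^sub>v b = b \<and> pinv U * U = 1\<^sub>m (k * r)))
    \<and> (U * pinv U *\<^sub>v b = b \<and> pinv U * U = 1\<^sub>m (k * r) \<longrightarrow>
         (\<forall>A. is_solution k n m L X E A \<longrightarrow>
              (\<forall>i<k. vecm (A i) = P *\<^sub>v (kron (unit_row k (k - i)) (1\<^sub>m r) *\<^sub>v (pinv U *\<^sub>v b)))))"
proof -
  have Sc: "\<forall>l\<in>{1..r}. S l \<in> carrier_mat n n" using basis unfolding is_basis_def by blast
  have Xc: "X \<in> carrier_mat n m" unfolding X_def realform_X_def by simp
  have Ec: "E \<in> carrier_mat m m" unfolding E_def realform_E_def by simp
  have Ueq: "U = Umat k n m r P X E" unfolding U_def P_def X_def E_def by simp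
  have beq: "b = vecm (- (X * E ^\<^sub>m k))" unfolding b_def X_def E_def by simp
  have Uc: "U \<in> carrier_mat (m*n) (k*r)" unfolding U_def Umat_def by simp
  have Rc: "- (X * E ^\<^sub>m k) \<in> carrier_mat n m" using Xc Ec by simp
  define V where "V = pinv U"
  have pv: "is_pinv U V" unfolding V_def by (rule pinv_is_pinv)
  have "V \<in> carrier_mat (dim_col U) (dim_row U)" using pv unfolding is_pinv_def by blast
  hence Vc: "V \<in> carrier_mat (k*r) (m*n)" using carrier_matD[OF Uc] by simp
  have UVU: "U * V * U = U" using pv unfolding is_pinv_def by blast
  have bc: "b \<in> carrier_vec (m*n)" unfolding beq
    by (intro carrier_vecI) (simp only: vecm_dim[OF Rc] mult.commute)
  have KEY': "(U *\<^sub>v z = b) \<longleftrightarrow> msum n m k (\<lambda>i. Ahat n r S z (k-1-i) * X * E ^\<^sub>m i) = - (X * E ^\<^sub>m k)"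
    if z: "z \<in> carrier_vec (k*r)" for z
    unfolding Ueq beq P_def by (rule KEY[OF Sc Xc Ec z])
  have solz: "is_solution k n m L X E (\<lambda>i. Ahat n r S z (k-1-i))"
    if z: "z \<in> carrier_vec (k*r)" and e: "U *\<^sub>v z = b" for z
    unfolding is_solution_def
  proof (intro conjI allI impI)
    fix i assume "i < k"
    show "Ahat n r S z (k-1-i) \<in> carrier_mat n n" unfolding Ahat_def by simp
    show "Ahat n r S z (k-1-i) \<in> L" unfolding L_def Ahat_def span_L_def by blast
  next
    show "msum n m k (\<lambda>i. Ahat n r S z (k-1-i) * X * E ^\<^sub>m i) = - (X * E ^\<^sub>m k)"
      using KEY'[OF z] e by simp
  qed
  have solcong: "is_solution k n m L X E A = is_solution k n m L X E B"
    if "\<And>i. i < k \<Longrightarrow> A i = B i" for A B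
  proof -
    have "msum n m k (\<lambda>i. A i * X * E ^\<^sub>m i) = msum n m k (\<lambda>i. B i * X * E ^\<^sub>m i)"
      by (rule msum_cong) (simp add: that)
    thus ?thesis unfolding is_solution_def using that by auto
  qed
  have zsol: "\<exists>z\<in>carrier_vec (k*r). (\<forall>i<k. A i = Ahat n r S z (k-1-i)) \<and> U *\<^sub>v z = b"
    if s: "is_solution k n m L X E A" for A
  proof -
    have "\<forall>i<k. A i \<in> span_L n r S" using s unfolding is_solution_def L_def by blast
    then obtain z where z: "z \<in> carrier_vec (k*r)" and Az: "\<forall>i<k. A i = Ahat n r S z (k-1-i)"
      using REP by blast
    have "is_solution k n m L X E (\<lambda>i. Ahat n r S z (k-1-i))"
      using s solcong[of A "\<lambda>i. Ahat n r S z (k-1-i)"] Az by simp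
    hence "msum n m k (\<lambda>i. Ahat n r S z (k-1-i) * X * E ^\<^sub>m i) = - (X * E ^\<^sub>m k)"
      unfolding is_solution_def by blast
    hence "U *\<^sub>v z = b" using KEY'[OF z] by simp
    thus ?thesis using z Az by blast
  qed
  have Vb: "V *\<^sub>v b \<in> carrier_vec (k*r)" using Vc bc by simp
  have UVb: "U *\<^sub>v (V *\<^sub>v b) = U * V *\<^sub>v b" using Uc Vc bc by simp
  have P1: "(\<exists>A. is_solution k n m L X E A) \<longleftrightarrow> U * V *\<^sub>v b = b"
  proof
    assume "\<exists>A. is_solution k n m L X E A"
    then obtain A where "is_solution k n m L X E A" by blast
    from zsol[OF this] obtain z where "z \<in> carrier_vec (k*r)" "U *\<^sub>v z = b" by blast
    thus "U * V *\<^sub>v b = b" using LA_cons[OF Uc Vc UVU] by blast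
  next
    assume "U * V *\<^sub>v b = b"
    hence "U *\<^sub>v (V *\<^sub>v b) = b" using UVb by simp
    thus "\<exists>A. is_solution k n m L X E A" using solz[OF Vb] by blast
  qed
  have P2: "is_solution k n m L X E A \<longleftrightarrow>
              ((\<forall>i<k. A i \<in> carrier_mat n n) \<and>
               (\<exists>y \<in> carrier_vec (k * r). \<forall>i<k.
                  vecm (A i) = P *\<^sub>v (kron (unit_row k (k - i)) (1\<^sub>m r) *\<^sub>v
                     (V *\<^sub>v b + (1\<^sub>m (k * r) - V * U) *\<^sub>v y))))"
    if c: "U * V *\<^sub>v b = b" for A
  proof
    assume s: "is_solution k n m L X E A"
    hence Ac: "\<forall>i<k. A i \<in> carrier_mat n n" unfolding is_solution_def by blast
    from zsol[OF s] obtain z where z: "z \<in> carrier_vec (k*r)" and Az: "\<forall>i<k. A i = Ahat n r S z (k-1-i)"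
      and e: "U *\<^sub>v z = b" by blast
    have zr: "z = V *\<^sub>v b + (1\<^sub>m (k * r) - V * U) *\<^sub>v z" by (rule LA_rep[OF Uc Vc z e])
    have "\<forall>i<k. vecm (A i) = P *\<^sub>v (kron (unit_row k (k - i)) (1\<^sub>m r) *\<^sub>v
                     (V *\<^sub>v b + (1\<^sub>m (k * r) - V * U) *\<^sub>v z))"
    proof (intro allI impI)
      fix i assume i: "i < k"
      show "vecm (A i) = P *\<^sub>v (kron (unit_row k (k - i)) (1\<^sub>m r) *\<^sub>v
                     (V *\<^sub>v b + (1\<^sub>m (k * r) - V * U) *\<^sub>v z))"
        unfolding zr[symmetric] P_def using REPVEC[OF Sc _ i z] Ac Az i by blast
    qed
    thus "(\<forall>i<k. A i \<in> carrier_mat n n) \<and> (\<exists>y \<in> carrier_vec (k * r). \<forall>i<k.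
                  vecm (A i) = P *\<^sub>v (kron (unit_row k (k - i)) (1\<^sub>m r) *\<^sub>v
                     (V *\<^sub>v b + (1\<^sub>m (k * r) - V * U) *\<^sub>v y)))"
      using Ac z by blast
  next
    assume H: "(\<forall>i<k. A i \<in> carrier_mat n n) \<and> (\<exists>y \<in> carrier_vec (k * r). \<forall>i<k.
                  vecm (A i) = P *\<^sub>v (kron (unit_row k (k - i)) (1\<^sub>m r) *\<^sub>v
                     (V *\<^sub>v b + (1\<^sub>m (k * r) - V * U) *\<^sub>v y)))"
    then obtain y where y: "y \<in> carrier_vec (k*r)" and Ac: "\<forall>i<k. A i \<in> carrier_mat n n"
      and Hy: "\<forall>i<k. vecm (A i) = P *\<^sub>v (kron (unit_row k (k - i)) (1\<^sub>m r) *\<^sub>v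
                     (V *\<^sub>v b + (1\<^sub>m (k * r) - V * U) *\<^sub>v y))" by blast
    define z where "z = V *\<^sub>v b + (1\<^sub>m (k * r) - V * U) *\<^sub>v y"
    have Mc: "1\<^sub>m (k * r) - V * U \<in> carrier_mat (k*r) (k*r)" using Uc Vc by (intro minus_carrier_mat) simp
    have z: "z \<in> carrier_vec (k*r)" unfolding z_def using Vb Mc y by simp
    have e: "U *\<^sub>v z = b" unfolding z_def by (rule LA_gen[OF Uc Vc UVU bc c y])
    have Az: "A i = Ahat n r S z (k-1-i)" if i: "i < k" for i
      using REPVEC[OF Sc _ i z] Ac Hy i unfolding z_def[symmetric] P_def by blast
    show "is_solution k n m L X E A" using solz[OF z e] solcong[of A "\<lambda>i. Ahat n r S z (k-1-i)"] Az by simp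
  qed
  have P3: "((\<exists>A. is_solution k n m L X E A) \<and>
         (\<forall>A B. is_solution k n m L X E A \<longrightarrow> is_solution k n m L X E B \<longrightarrow> (\<forall>i<k. A i = B i)))
        \<longleftrightarrow> (U * V *\<^sub>v b = b \<and> V * U = 1\<^sub>m (k * r))"
  proof
    assume H: "(\<exists>A. is_solution k n m L X E A) \<and>
         (\<forall>A B. is_solution k n m L X E A \<longrightarrow> is_solution k n m L X E B \<longrightarrow> (\<forall>i<k. A i = B i))"
    hence c: "U * V *\<^sub>v b = b" using P1 by blast
    have e0: "U *\<^sub>v (V *\<^sub>v b) = b" using c UVb by simp
    have "V * U = 1\<^sub>m (k * r)"
    proof (rule LA_VU[OF Uc Vc])
      fix y :: "real vec" assume y: "y \<in> carrier_vec (k*r)"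
      define w where "w = (1\<^sub>m (k * r) - V * U) *\<^sub>v y"
      have Mc: "1\<^sub>m (k * r) - V * U \<in> carrier_mat (k*r) (k*r)" using Uc Vc by (intro minus_carrier_mat) simp
      have w: "w \<in> carrier_vec (k*r)" unfolding w_def using Mc y by simp
      have z1: "V *\<^sub>v b + w \<in> carrier_vec (k*r)" using Vb w by simp
      have e1: "U *\<^sub>v (V *\<^sub>v b + w) = b" unfolding w_def by (rule LA_gen[OF Uc Vc UVU bc c y])
      have s0: "is_solution k n m L X E (\<lambda>i. Ahat n r S (V *\<^sub>v b) (k-1-i))" by (rule solz[OF Vb e0])
      have s1: "is_solution k n m L X E (\<lambda>i. Ahat n r S (V *\<^sub>v b + w) (k-1-i))" by (rule solz[OF z1 e1])
      have eqA: "\<forall>i<k. Ahat n r S (V *\<^sub>v b) (k-1-i) = Ahat n r S (V *\<^sub>v b + w) (k-1-i)"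
        using H s0 s1 by blast
      have "V *\<^sub>v b = V *\<^sub>v b + w"
      proof (rule INJ[OF basis Vb z1])
        fix l assume l: "l < k"
        have "k - 1 - l < k" and "k - 1 - (k - 1 - l) = l" using l by auto
        thus "Ahat n r S (V *\<^sub>v b) l = Ahat n r S (V *\<^sub>v b + w) l" using eqA by metis
      qed
      hence eqv: "V *\<^sub>v b = V *\<^sub>v b + w" .
      have "w = 0\<^sub>v (k*r)"
      proof (rule eq_vecI)
        fix i assume "i < dim_vec (0\<^sub>v (k*r) :: real vec)"
        hence i: "i < k*r" by simp
        have "(V *\<^sub>v b) $ i = (V *\<^sub>v b + w) $ i" using eqv by simp
        thus "w $ i = (0\<^sub>v (k*r) :: real vec) $ i" using w Vb i by simp
      qed (use w in simp)
      thus "(1\<^sub>m (k * r) - V * U) *\<^sub>v y = 0\<^sub>v (k*r)" unfolding w_def .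
    qed
    thus "U * V *\<^sub>v b = b \<and> V * U = 1\<^sub>m (k * r)" using c by blast
  next
    assume H: "U * V *\<^sub>v b = b \<and> V * U = 1\<^sub>m (k * r)"
    have ex: "\<exists>A. is_solution k n m L X E A" using H P1 by blast
    have "\<forall>i<k. A i = B i" if sA: "is_solution k n m L X E A" and sB: "is_solution k n m L X E B" for A B
    proof -
      from zsol[OF sA] obtain zA where zA: "zA \<in> carrier_vec (k*r)" "\<forall>i<k. A i = Ahat n r S zA (k-1-i)" "U *\<^sub>v zA = b" by blast
      from zsol[OF sB] obtain zB where zB: "zB \<in> carrier_vec (k*r)" "\<forall>i<k. B i = Ahat n r S zB (k-1-i)" "U *\<^sub>v zB = b" by blast
      have "zA = V *\<^sub>v b" using LA_inj[OF Uc Vc _ zA(1) zA(3)] H by blast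
      moreover have "zB = V *\<^sub>v b" using LA_inj[OF Uc Vc _ zB(1) zB(3)] H by blast
      ultimately show ?thesis using zA(2) zB(2) by simp
    qed
    thus "(\<exists>A. is_solution k n m L X E A) \<and>
         (\<forall>A B. is_solution k n m L X E A \<longrightarrow> is_solution k n m L X E B \<longrightarrow> (\<forall>i<k. A i = B i))"
      using ex by blast
  qed
  have P4: "\<forall>i<k. vecm (A i) = P *\<^sub>v (kron (unit_row k (k - i)) (1\<^sub>m r) *\<^sub>v (V *\<^sub>v b))"
    if H: "U * V *\<^sub>v b = b \<and> V * U = 1\<^sub>m (k * r)" and s: "is_solution k n m L X E A" for A
  proof (intro allI impI)
    fix i assume i: "i < k"
    have Ac: "A i \<in> carrier_mat n n" using s i unfolding is_solution_def by blast
    from zsol[OF s] obtain z where z: "z \<in> carrier_vec (k*r)" "\<forall>i<k. A i = Ahat n r S z (k-1-i)" "U *\<^sub>v z = b" by blast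
    have zV: "z = V *\<^sub>v b" using LA_inj[OF Uc Vc _ z(1) z(3)] H by blast
    show "vecm (A i) = P *\<^sub>v (kron (unit_row k (k - i)) (1\<^sub>m r) *\<^sub>v (V *\<^sub>v b))"
      unfolding zV[symmetric] P_def using REPVEC[OF Sc Ac i z(1)] z(2) i by blast
  qed
  show ?thesis unfolding V_def[symmetric] using P1 P2 P3 P4 by blast
qed

end
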